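(* Let $d\ge1$, $\Theta\subseteq\mathbb{R}$, and let $g:\Theta\to\mathbb{R}$ be continuously differentiable, one-to-one, with $\mathrm{d}g/\mathrm{d}\theta\neq0$ on $\Theta$, applied entrywise. Let $\boldsymbol{\theta}\in\Theta^d$ be a random vector with marginal distribution $p_{\boldsymbol{\theta}}$, let $\mathbf{x}_0=g(\boldsymbol{\theta})$ with distribution $p_{\mathbf{x}_0}$, and for $t\in[\epsilon,1]$ let $p_{\mathbf{x}_t\mid\mathbf{x}_0}(\cdot\mid\mathbf{x}_0)$ be the density of $\mathcal{N}(\sqrt{\alpha_t}\,\mathbf{x}_0,\,v_t\mathbf{I}_d)$, where $\alpha_t=\exp(-\int_0^t\beta(s)\,\mathrm{d}s)$, $v_t=1-\alpha_t$, $\beta:\mathbb{R}\to\mathbb{R}_+$. Let $\mathbf{T}_{\boldsymbol{\theta}}:\Theta^d\to\mathbb{R}^{k}$ be a measurable function and $\boldsymbol{\zeta}:\mathbb{R}^d\to\mathbb{R}^{k}$ a Lipschitz continuous function. Suppose $$\mathbb{E}_{\boldsymbol{\theta}\sim p_{\boldsymbol{\theta}}}\big[\|\mathbf{T}_{\boldsymbol{\theta}}(\boldsymbol{\theta})\|\big]<\infty,\qquad \mathbb{E}_{\boldsymbol{\theta}\sim p_{\boldsymbol{\theta}}}\big[\|g(\boldsymbol{\theta})\|\,\|\mathbf{T}_{\boldsymbol{\theta}}(\boldsymbol{\theta})\|\big]<\infty.$$ Then for all $t\in[\epsilon,1]$, $$\int p_{\mathbf{x}_0}(\mathbf{x}_0)\int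 p_{\mathbf{x}_t\mid\mathbf{x}_0}(\mathbf{x}_t\mid\mathbf{x}_0)\,\big|\boldsymbol{\zeta}(\mathbf{x}_t)^{\top}\mathbf{T}_{\boldsymbol{\theta}}(g^{-1}(\mathbf{x}_0))\big|\,\mathrm{d}\mathbf{x}_t\,\mathrm{d}\mathbf{x}_0<\infty.$$
   Context: $\|\cdot\|$ is the Euclidean norm and $\epsilon>0$ is a small constant. In the paper, $\mathbf{T}_{\boldsymbol{\theta}}$ is the sufficient statistic (valued in $\mathbb{R}^{2d}$) of the natural conjugate prior of a one-parameter exponential-family likelihood, and $\boldsymbol{\zeta}$ gives the hyperparameters of that prior as a function of $\mathbf{x}_t$. *)

theory Defs
  imports "HOL-Probability.Probability"
begin

definition alpha_sched :: "(real \<Rightarrow> real) \<Rightarrow> real \<Rightarrow> real" where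
  "alpha_sched \<beta> t = exp (- (LBINT s=0..t. \<beta> s))"

definition var_sched :: "(real \<Rightarrow> real) \<Rightarrow> real \<Rightarrow> real" where
  "var_sched \<beta> t = 1 - alpha_sched \<beta> t"

definition cond_density :: "(real \<Rightarrow> real) \<Rightarrow> real \<Rightarrow> real ^ 'd \<Rightarrow> real ^ 'd \<Rightarrow> real" where
  "cond_density \<beta> t x0 xt =
     (\<Prod>i\<in>UNIV. normal_density (sqrt (alpha_sched \<beta> t) * x0 $ i) (sqrt (var_sched \<beta> t)) (xt $ i))"

definition entrywise :: "(real \<Rightarrow> real) \<Rightarrow> real ^ 'd \<Rightarrow> real ^ 'd" where
  "entrywise g x = (\<chi> i. g (x $ i))"

end

theory Submission
  imports Defs
begin

lemma nd_one:
  assumes "0 < \<sigma>"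
  shows "(\<integral>\<^sup>+x. ennreal (normal_density \<mu> \<sigma> x) \<partial>lborel) = 1"
  using assms by (subst nn_integral_eq_integral) auto

lemma nd_abs:
  assumes s: "0 < \<sigma>"
  shows "(\<integral>\<^sup>+x. ennreal (normal_density \<mu> \<sigma> x * \<bar>x\<bar>) \<partial>lborel) \<le> ennreal (\<bar>\<mu>\<bar> + \<sigma>)"
proof -
  have hb: "has_bochner_integral lborel (\<lambda>x. normal_density \<mu> \<sigma> x * \<bar>x - \<mu>\<bar>) (\<sigma> * sqrt (2 / pi))"
    using normal_moment_abs_odd[OF s, of \<mu> 0] by simp
  have "(\<integral>\<^sup>+x. ennreal (normal_density \<mu> \<sigma> x * \<bar>x\<bar>) \<partial>lborel)
     \<le> (\<integral>\<^sup>+x. ennreal (\<bar>\<mu>\<bar> * normal_density \<mu> \<sigma> x) + ennreal (normal_density \<mu> \<sigma> x * \<bar>x - \<mu>\<bar>) \<partial>lborel)"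
  proof (rule nn_integral_mono)
    fix x
    have "normal_density \<mu> \<sigma> x * \<bar>x\<bar> \<le> \<bar>\<mu>\<bar> * normal_density \<mu> \<sigma> x + normal_density \<mu> \<sigma> x * \<bar>x - \<mu>\<bar>"
    proof -
      have "\<bar>x\<bar> \<le> \<bar>\<mu>\<bar> + \<bar>x - \<mu>\<bar>" by linarith
      from mult_left_mono[OF this normal_density_nonneg[of \<mu> \<sigma> x]] show ?thesis
        by (simp add: algebra_simps)
    qed
    then show "ennreal (normal_density \<mu> \<sigma> x * \<bar>x\<bar>) \<le> ennreal (\<bar>\<mu>\<bar> * normal_density \<mu> \<sigma> x) + ennreal (normal_density \<mu> \<sigma> x * \<bar>x - \<mu>\<bar>)"
      by (simp add: ennreal_plus[symmetric] del: ennreal_plus)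
  qed
  also have "\<dots> = (\<integral>\<^sup>+x. ennreal (\<bar>\<mu>\<bar> * normal_density \<mu> \<sigma> x) \<partial>lborel) + (\<integral>\<^sup>+x. ennreal (normal_density \<mu> \<sigma> x * \<bar>x - \<mu>\<bar>) \<partial>lborel)"
    by (rule nn_integral_add) auto
  also have "(\<integral>\<^sup>+x. ennreal (\<bar>\<mu>\<bar> * normal_density \<mu> \<sigma> x) \<partial>lborel) = ennreal \<bar>\<mu>\<bar>"
    using s by (simp add: ennreal_mult nn_integral_cmult nd_one)
  also have "(\<integral>\<^sup>+x. ennreal (normal_density \<mu> \<sigma> x * \<bar>x - \<mu>\<bar>) \<partial>lborel) = ennreal (\<sigma> * sqrt (2 / pi))"
    using hb by (subst nn_integral_eq_integral) (auto simp: has_bochner_integral_iff)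
  also have "ennreal \<bar>\<mu>\<bar> + ennreal (\<sigma> * sqrt (2 / pi)) \<le> ennreal (\<bar>\<mu>\<bar> + \<sigma>)"
  proof -
    have "sqrt (2 / pi) \<le> 1" using pi_gt3 by (simp add: real_sqrt_le_1_iff) 
    then have "\<sigma> * sqrt (2 / pi) \<le> \<sigma>" using s by (simp add: mult_left_le)
    then show ?thesis using s by (simp add: ennreal_plus[symmetric] del: ennreal_plus)
  qed
  finally show ?thesis .
qed

lemma prod_int:
  fixes h :: "'d::finite \<Rightarrow> real \<Rightarrow> ennreal"
  assumes [measurable]: "\<And>i. h i \<in> borel_measurable borel"
  shows "(\<integral>\<^sup>+x. (\<Prod>i\<in>UNIV. h i ((x::real^'d) $ i)) \<partial>lborel) = (\<Prod>i\<in>UNIV. \<integral>\<^sup>+x. h i x \<partial>lborel)"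
proof -
  have B: "(Basis :: (real^'d) set) = range (\<lambda>i. axis i 1)"
    by (auto simp: Basis_vec_def)
  have inj: "inj (\<lambda>i::'d. axis i (1::real))"
    by (auto simp: inj_def axis_eq_axis)
  have "(\<integral>\<^sup>+x. (\<Prod>b\<in>Basis. h (axis_index b) ((x::real^'d) \<bullet> b)) \<partial>lborel) = (\<Prod>b\<in>(Basis::(real^'d) set). \<integral>\<^sup>+x. h (axis_index b) x \<partial>lborel)"
    using nn_integral_lborel_prod[of "\<lambda>b. h (axis_index b)"] by simp
  moreover have "\<And>x::real^'d. (\<Prod>b\<in>Basis. h (axis_index b) (x \<bullet> b)) = (\<Prod>i\<in>UNIV. h i (x $ i))"
    unfolding B by (subst prod.reindex[OF inj]) (simp add: inner_axis)
  moreover have "(\<Prod>b\<in>(Basis::(real^'d) set). \<integral>\<^sup>+x. h (axis_index b) x \<partial>lborel) = (\<Prod>i\<in>UNIV. \<integral>\<^sup>+x. h i x \<partial>lborel)"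
    unfolding B by (subst prod.reindex[OF inj]) simp
  ultimately show ?thesis by simp
qed


lemma inner_bound:
  fixes \<mu> :: "real^'d" and w :: "real^'k" and \<zeta> :: "real^'d \<Rightarrow> real^'k"
  assumes s: "0 < \<sigma>" and L: "0 \<le> L" and zb: "\<And>x. norm (\<zeta> x) \<le> C0 + L * norm x"
  shows "(\<integral>\<^sup>+xt. ennreal ((\<Prod>i\<in>UNIV. normal_density (\<mu>$i) \<sigma> (xt$i)) * \<bar>\<zeta> xt \<bullet> w\<bar>) \<partial>lborel)
         \<le> ennreal (norm w * (C0 + L * (\<Sum>j\<in>UNIV. \<bar>\<mu>$j\<bar> + \<sigma>)))"
proof -
  define D where "D = (\<lambda>xt::real^'d. \<Prod>i\<in>UNIV. normal_density (\<mu>$i) \<sigma> (xt$i))"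
  have C0: "0 \<le> C0" using zb[of 0] by (simp add: order_trans[OF norm_ge_zero])
  have Dnn: "\<And>x. 0 \<le> D x" unfolding D_def by (intro prod_nonneg) auto
  have Dm[measurable]: "D \<in> borel_measurable lborel" unfolding D_def by measurable
  have pw: "D xt * \<bar>\<zeta> xt \<bullet> w\<bar> \<le> norm w * (C0 * D xt + (\<Sum>j\<in>UNIV. L * (D xt * \<bar>xt$j\<bar>)))" for xt
  proof -
    have "\<bar>\<zeta> xt \<bullet> w\<bar> \<le> norm (\<zeta> xt) * norm w" by (rule Cauchy_Schwarz_ineq2)
    also have "\<dots> \<le> (C0 + L * (\<Sum>j\<in>UNIV. \<bar>xt$j\<bar>)) * norm w"
    proof (rule mult_right_mono)
      have "norm xt \<le> (\<Sum>j\<in>UNIV. \<bar>xt$j\<bar>)" by (rule norm_le_l1_cart)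
      then show "norm (\<zeta> xt) \<le> C0 + L * (\<Sum>j\<in>UNIV. \<bar>xt$j\<bar>)"
        using zb[of xt] mult_left_mono[OF _ L] by (meson add_left_mono order_trans)
    qed simp
    finally have "D xt * \<bar>\<zeta> xt \<bullet> w\<bar> \<le> D xt * ((C0 + L * (\<Sum>j\<in>UNIV. \<bar>xt$j\<bar>)) * norm w)"
      by (rule mult_left_mono) (rule Dnn)
    also have "\<dots> = norm w * (C0 * D xt + (\<Sum>j\<in>UNIV. L * (D xt * \<bar>xt$j\<bar>)))"
      by (simp add: algebra_simps sum_distrib_left sum_distrib_right)
    finally show ?thesis .
  qed
  have "(\<integral>\<^sup>+xt. ennreal ((\<Prod>i\<in>UNIV. normal_density (\<mu>$i) \<sigma> (xt$i)) * \<bar>\<zeta> xt \<bullet> w\<bar>) \<partial>lborel)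
     \<le> (\<integral>\<^sup>+xt. ennreal (norm w) * (ennreal C0 * ennreal (D xt) + (\<Sum>j\<in>UNIV. ennreal L * ennreal (D xt * \<bar>xt$j\<bar>))) \<partial>lborel)"
  proof (rule nn_integral_mono)
    fix xt
    have "ennreal (norm w) * (ennreal C0 * ennreal (D xt) + (\<Sum>j\<in>UNIV. ennreal L * ennreal (D xt * \<bar>xt$j\<bar>)))
      = ennreal (norm w * (C0 * D xt + (\<Sum>j\<in>UNIV. L * (D xt * \<bar>xt$j\<bar>))))"
    proof -
      have e1: "(\<Sum>j\<in>UNIV. ennreal L * ennreal (D xt * \<bar>xt$j\<bar>)) = ennreal (\<Sum>j\<in>UNIV. L * (D xt * \<bar>xt$j\<bar>))"
        using L Dnn by (simp add: ennreal_mult[symmetric])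
      have e2: "ennreal C0 * ennreal (D xt) = ennreal (C0 * D xt)" using C0 Dnn by (simp add: ennreal_mult)
      have nn: "0 \<le> (\<Sum>j\<in>UNIV. L * (D xt * \<bar>xt$j\<bar>))" using L Dnn by (intro sum_nonneg) simp
      show ?thesis unfolding e1 e2 using C0 Dnn nn
        by (simp add: ennreal_mult[symmetric] ennreal_plus[symmetric] del: ennreal_plus)
    qed
    moreover have "ennreal (D xt * \<bar>\<zeta> xt \<bullet> w\<bar>) \<le> ennreal (norm w * (C0 * D xt + (\<Sum>j\<in>UNIV. L * (D xt * \<bar>xt$j\<bar>))))"
      by (rule ennreal_leI) (rule pw)
    ultimately show "ennreal ((\<Prod>i\<in>UNIV. normal_density (\<mu>$i) \<sigma> (xt$i)) * \<bar>\<zeta> xt \<bullet> w\<bar>)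
      \<le> ennreal (norm w) * (ennreal C0 * ennreal (D xt) + (\<Sum>j\<in>UNIV. ennreal L * ennreal (D xt * \<bar>xt$j\<bar>)))"
      unfolding D_def by simp
  qed
  also have "\<dots> = ennreal (norm w) * (ennreal C0 * (\<integral>\<^sup>+xt. ennreal (D xt) \<partial>lborel) + (\<Sum>j\<in>UNIV. ennreal L * (\<integral>\<^sup>+xt. ennreal (D xt * \<bar>xt$j\<bar>) \<partial>lborel)))"
    by (simp add: nn_integral_cmult nn_integral_add nn_integral_sum)
  also have "(\<integral>\<^sup>+xt. ennreal (D xt) \<partial>lborel) = 1"
  proof -
    have "(\<integral>\<^sup>+xt. ennreal (D xt) \<partial>lborel) = (\<integral>\<^sup>+xt. (\<Prod>i\<in>UNIV. ennreal (normal_density (\<mu>$i) \<sigma> ((xt::real^'d)$i))) \<partial>lborel)"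
      unfolding D_def by (simp add: prod_ennreal)
    also have "\<dots> = (\<Prod>i\<in>UNIV. \<integral>\<^sup>+x. ennreal (normal_density (\<mu>$i) \<sigma> x) \<partial>lborel)"
      by (rule prod_int) simp
    also have "\<dots> = 1" using s by (simp add: nd_one)
    finally show ?thesis .
  qed
  also have "(\<integral>\<^sup>+xt. ennreal (D xt * \<bar>xt$j\<bar>) \<partial>lborel) \<le> ennreal (\<bar>\<mu>$j\<bar> + \<sigma>)" for j
  proof -
    have "(\<integral>\<^sup>+xt. ennreal (D xt * \<bar>xt$j\<bar>) \<partial>lborel) = (\<integral>\<^sup>+xt. (\<Prod>i\<in>UNIV. ennreal (normal_density (\<mu>$i) \<sigma> ((xt::real^'d)$i) * (if i = j then \<bar>xt$i\<bar> else 1))) \<partial>lborel)"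
    proof (rule nn_integral_cong)
      fix xt :: "real^'d"
      have "(\<Prod>i\<in>UNIV. normal_density (\<mu>$i) \<sigma> (xt$i) * (if i = j then \<bar>xt$i\<bar> else 1))
          = (\<Prod>i\<in>UNIV. normal_density (\<mu>$i) \<sigma> (xt$i)) * (\<Prod>i\<in>UNIV. (if i = j then \<bar>xt$i\<bar> else 1))"
        by (rule prod.distrib)
      also have "(\<Prod>i\<in>UNIV. (if i = j then \<bar>xt$i\<bar> else 1)) = \<bar>xt$j\<bar>"
        by (simp add: prod.delta)
      finally show "ennreal (D xt * \<bar>xt$j\<bar>) = (\<Prod>i\<in>UNIV. ennreal (normal_density (\<mu>$i) \<sigma> (xt$i) * (if i = j then \<bar>xt$i\<bar> else 1)))"
        unfolding D_def by (simp add: prod_ennreal)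
    qed
    also have "\<dots> = (\<Prod>i\<in>UNIV. \<integral>\<^sup>+x. ennreal (normal_density (\<mu>$i) \<sigma> x * (if i = j then \<bar>x\<bar> else 1)) \<partial>lborel)"
      by (rule prod_int) simp
    also have "\<dots> = (\<Prod>i\<in>UNIV. if i = j then (\<integral>\<^sup>+x. ennreal (normal_density (\<mu>$j) \<sigma> x * \<bar>x\<bar>) \<partial>lborel) else 1)"
      by (rule prod.cong) (auto simp: nd_one s)
    also have "\<dots> = (\<integral>\<^sup>+x. ennreal (normal_density (\<mu>$j) \<sigma> x * \<bar>x\<bar>) \<partial>lborel)"
      by (simp add: prod.delta)
    also have "\<dots> \<le> ennreal (\<bar>\<mu>$j\<bar> + \<sigma>)" by (rule nd_abs[OF s])
    finally show ?thesis .
  qed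
  then have "ennreal (norm w) * (ennreal C0 * 1 + (\<Sum>j\<in>UNIV. ennreal L * (\<integral>\<^sup>+xt. ennreal (D xt * \<bar>xt$j\<bar>) \<partial>lborel)))
     \<le> ennreal (norm w) * (ennreal C0 * 1 + (\<Sum>j\<in>UNIV. ennreal L * ennreal (\<bar>\<mu>$j\<bar> + \<sigma>)))"
    by (intro mult_left_mono add_left_mono sum_mono) auto
  also have "\<dots> = ennreal (norm w * (C0 + L * (\<Sum>j\<in>UNIV. \<bar>\<mu>$j\<bar> + \<sigma>)))"
  proof -
    have e1: "(\<Sum>j\<in>UNIV. ennreal L * ennreal (\<bar>\<mu>$j\<bar> + \<sigma>)) = ennreal (\<Sum>j\<in>UNIV. L * (\<bar>\<mu>$j\<bar> + \<sigma>))"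
      using L s by (simp add: ennreal_mult[symmetric] del: ennreal_plus)
    have nn: "0 \<le> (\<Sum>j\<in>UNIV. L * (\<bar>\<mu>$j\<bar> + \<sigma>))" using L s by (intro sum_nonneg) simp
    show ?thesis unfolding e1 using C0 nn by (simp add: sum_distrib_left ennreal_mult[symmetric] ennreal_plus[symmetric] del: ennreal_plus)
  qed
  finally show ?thesis by simp
qed


lemma nn_integral_distr_le:
  assumes h: "h \<in> measurable M N"
  shows "integral\<^sup>N (distr M N h) f \<le> (\<integral>\<^sup>+x. f (h x) \<partial>M)"
  unfolding nn_integral_def[of "distr M N h"]
proof (rule SUP_least)
  fix g assume "g \<in> {g. simple_function (distr M N h) g \<and> g \<le> f}"
  then have g: "simple_function (distr M N h) g" "g \<le> f" by auto
  have gm: "g \<in> borel_measurable N"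
    using borel_measurable_simple_function[OF g(1)] by simp
  have "integral\<^sup>S (distr M N h) g = integral\<^sup>N (distr M N h) g"
    by (simp add: nn_integral_eq_simple_integral g(1))
  also have "\<dots> = (\<integral>\<^sup>+x. g (h x) \<partial>M)" by (rule nn_integral_distr[OF h]) (use gm in simp)
  also have "\<dots> \<le> (\<integral>\<^sup>+x. f (h x) \<partial>M)" using g(2) by (intro nn_integral_mono) (auto simp: le_fun_def)
  finally show "integral\<^sup>S (distr M N h) g \<le> (\<integral>\<^sup>+x. f (h x) \<partial>M)" .
qed


theorem lemmaI1:
  fixes \<Theta> :: "real set"
    and g g' :: "real \<Rightarrow> real"
    and P :: "(real ^ 'd) measure"
    and \<beta> :: "real \<Rightarrow> real"
    and T :: "real ^ 'd \<Rightarrow> real ^ 'k"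
    and \<zeta> :: "real ^ 'd \<Rightarrow> real ^ 'k"
    and \<epsilon> t :: real
  assumes g_deriv: "\<And>x. x \<in> \<Theta> \<Longrightarrow> (g has_real_derivative g' x) (at x within \<Theta>)"
    and g'_cont: "continuous_on \<Theta> g'"
    and g'_nz: "\<And>x. x \<in> \<Theta> \<Longrightarrow> g' x \<noteq> 0"
    and g_inj: "inj_on g \<Theta>"
    and P_prob: "prob_space P"
    and P_sets: "sets P = sets borel"
    and P_support: "AE \<theta> in P. \<forall>i. \<theta> $ i \<in> \<Theta>"
    and x0_meas: "entrywise g \<in> borel_measurable P"
    and \<beta>_pos: "\<And>s. \<beta> s > 0"
    and \<beta>_int: "set_integrable lborel {0..1} \<beta>"
    and T_meas: "T \<in> borel_measurable borel"
    and \<zeta>_lip: "\<exists>L. L-lipschitz_on UNIV \<zeta>"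
    and mom1: "(\<integral>\<^sup>+ \<theta>. ennreal (norm (T \<theta>)) \<partial>P) < \<infinity>"
    and mom2: "(\<integral>\<^sup>+ \<theta>. ennreal (norm (entrywise g \<theta>) * norm (T \<theta>)) \<partial>P) < \<infinity>"
    and eps_pos: "0 < \<epsilon>"
    and t_range: "t \<in> {\<epsilon>..1}"
  shows "(\<integral>\<^sup>+ x0. (\<integral>\<^sup>+ xt. ennreal (cond_density \<beta> t x0 xt *
            \<bar>\<zeta> xt \<bullet> T (entrywise (inv_into \<Theta> g) x0)\<bar>) \<partial>lborel)
          \<partial>(distr P borel (entrywise g))) < \<infinity>"
proof -
  obtain L where Lip: "L-lipschitz_on UNIV \<zeta>" using \<zeta>_lip by blast
  have L: "0 \<le> L" using Lip by (rule lipschitz_on_nonneg)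
  define C0 where "C0 = norm (\<zeta> 0)"
  have C0: "0 \<le> C0" unfolding C0_def by simp
  have zb: "norm (\<zeta> x) \<le> C0 + L * norm x" for x
  proof -
    have "dist (\<zeta> x) (\<zeta> 0) \<le> L * dist x 0" using Lip by (rule lipschitz_onD) auto
    then show ?thesis unfolding C0_def dist_norm
      by (metis add.commute diff_zero norm_triangle_sub order_trans add_left_mono)
  qed
  define a where "a = sqrt (alpha_sched \<beta> t)"
  define s where "s = sqrt (var_sched \<beta> t)"
  define \<sigma> where "\<sigma> = \<bar>s\<bar>"
  define d where "d = real CARD('d)"
  define G where "G x0 = ennreal (norm (T (entrywise (inv_into \<Theta> g) x0)) * (C0 + L * (\<Sum>j\<in>UNIV. \<bar>a * x0$j\<bar> + \<sigma>)))" for x0 :: "real^'d"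
  have I_le: "(\<integral>\<^sup>+ xt. ennreal (cond_density \<beta> t x0 xt * \<bar>\<zeta> xt \<bullet> T (entrywise (inv_into \<Theta> g) x0)\<bar>) \<partial>lborel) \<le> G x0" for x0
  proof (cases "s = 0")
    case True
    have "cond_density \<beta> t x0 xt = 0" for xt
      unfolding cond_density_def using True by (simp add: s_def normal_density_def)
    then show ?thesis by simp
  next
    case False
    then have sp: "0 < \<sigma>" by (simp add: \<sigma>_def)
    have cd: "cond_density \<beta> t x0 xt = (\<Prod>i\<in>UNIV. normal_density ((\<chi> i. a * x0$i)$i) \<sigma> (xt$i))" for xt
      unfolding cond_density_def by (simp add: a_def s_def \<sigma>_def normal_density_def)
    show ?thesis
      unfolding cd G_def using inner_bound[OF sp L zb, of "\<chi> i. a * x0$i" "T (entrywise (inv_into \<Theta> g) x0)"]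
      by simp
  qed
  have Tm[measurable]: "T \<in> borel_measurable P"
    by (subst measurable_cong_sets[OF P_sets refl]) (rule T_meas)
  note x0_meas[measurable]
  define K1 where "K1 = C0 + L * d * \<sigma>"
  define K2 where "K2 = L * \<bar>a\<bar> * d"
  have K1: "0 \<le> K1" using C0 L by (simp add: K1_def \<sigma>_def d_def)
  have K2: "0 \<le> K2" using L by (simp add: K2_def d_def)
  have "(\<integral>\<^sup>+ x0. (\<integral>\<^sup>+ xt. ennreal (cond_density \<beta> t x0 xt *
            \<bar>\<zeta> xt \<bullet> T (entrywise (inv_into \<Theta> g) x0)\<bar>) \<partial>lborel)
          \<partial>(distr P borel (entrywise g))) \<le> (\<integral>\<^sup>+ x0. G x0 \<partial>(distr P borel (entrywise g)))"
    by (rule nn_integral_mono) (rule I_le)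
  also have "\<dots> \<le> (\<integral>\<^sup>+ \<theta>. G (entrywise g \<theta>) \<partial>P)"
    by (rule nn_integral_distr_le) (rule x0_meas)
  also have "\<dots> \<le> (\<integral>\<^sup>+ \<theta>. ennreal K1 * ennreal (norm (T \<theta>)) + ennreal K2 * ennreal (norm (entrywise g \<theta>) * norm (T \<theta>)) \<partial>P)"
  proof (rule nn_integral_mono_AE)
    show "AE \<theta> in P. G (entrywise g \<theta>) \<le> ennreal K1 * ennreal (norm (T \<theta>)) + ennreal K2 * ennreal (norm (entrywise g \<theta>) * norm (T \<theta>))"
      using P_support
    proof eventually_elim
      case (elim \<theta>)
      define y where "y = entrywise g \<theta>"
      have inv: "entrywise (inv_into \<Theta> g) y = \<theta>"
        using elim by (simp add: y_def entrywise_def vec_eq_iff inv_into_f_f[OF g_inj])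
      have S1: "(\<Sum>j\<in>UNIV. \<bar>a * y$j\<bar>) \<le> \<bar>a\<bar> * d * norm y"
      proof -
        have "(\<Sum>j\<in>UNIV. \<bar>a * y$j\<bar>) = \<bar>a\<bar> * (\<Sum>j\<in>UNIV. \<bar>y$j\<bar>)" by (simp add: abs_mult sum_distrib_left)
        also have "(\<Sum>j\<in>UNIV. \<bar>y$j\<bar>) \<le> d * norm y"
          using sum_bounded_above[of UNIV "\<lambda>j. \<bar>y$j\<bar>" "norm y"] component_le_norm_cart[of y]
          by (simp add: d_def)
        then have "\<bar>a\<bar> * (\<Sum>j\<in>UNIV. \<bar>y$j\<bar>) \<le> \<bar>a\<bar> * (d * norm y)" by (rule mult_left_mono) simp
        finally show ?thesis by simp
      qed
      have S: "(\<Sum>j\<in>UNIV. \<bar>a * y$j\<bar> + \<sigma>) \<le> \<bar>a\<bar> * d * norm y + d * \<sigma>"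
        using S1 by (simp add: sum.distrib d_def)
      have "C0 + L * (\<Sum>j\<in>UNIV. \<bar>a * y$j\<bar> + \<sigma>) \<le> C0 + L * (\<bar>a\<bar> * d * norm y + d * \<sigma>)"
        using mult_left_mono[OF S L] by simp
      then have "norm (T \<theta>) * (C0 + L * (\<Sum>j\<in>UNIV. \<bar>a * y$j\<bar> + \<sigma>)) \<le> norm (T \<theta>) * (C0 + L * (\<bar>a\<bar> * d * norm y + d * \<sigma>))"
        by (rule mult_left_mono) simp
      also have "\<dots> = K1 * norm (T \<theta>) + K2 * (norm y * norm (T \<theta>))"
        by (simp add: K1_def K2_def algebra_simps)
      finally have r: "norm (T \<theta>) * (C0 + L * (\<Sum>j\<in>UNIV. \<bar>a * y$j\<bar> + \<sigma>)) \<le> K1 * norm (T \<theta>) + K2 * (norm y * norm (T \<theta>))" .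
      have "G y \<le> ennreal (K1 * norm (T \<theta>) + K2 * (norm y * norm (T \<theta>)))"
        unfolding G_def inv by (rule ennreal_leI[OF r])
      also have "\<dots> = ennreal K1 * ennreal (norm (T \<theta>)) + ennreal K2 * ennreal (norm y * norm (T \<theta>))"
        using K1 K2 by (simp add: ennreal_mult)
      finally show ?case by (simp add: y_def)
    qed
  qed
  also have "\<dots> = ennreal K1 * (\<integral>\<^sup>+ \<theta>. ennreal (norm (T \<theta>)) \<partial>P) + ennreal K2 * (\<integral>\<^sup>+ \<theta>. ennreal (norm (entrywise g \<theta>) * norm (T \<theta>)) \<partial>P)"
    by (simp add: nn_integral_add nn_integral_cmult)
  also have "\<dots> < \<infinity>"
    using mom1 mom2 by (simp add: ennreal_mult_less_top less_top)
  finally show ?thesis .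
qed

end
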